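(* Let $n\in\mathbb N$ and $M>0$. Let $X,Y$ be independent, identically distributed real random variables with $|X|\le\big(\frac{2n-1}{3M}\big)^{\frac{1}{2n-1}}$ almost surely and ${\bf E}[X^{2j-1}]=0$ for all $j=1,\dots,n$. Then $${\bf E}\big[|X-Y|^{2n+1}\big]-2\,{\bf E}\big[X^{2n+1}\big]-M\big({\bf E}[X^{2n}]\big)^2\ge 0.$$ *)

theory Defs
  imports "HOL-Probability.Probability"
begin

end

theory Submission
  imports Defs
begin

lemma caseA:
  fixes x y K :: real and n :: nat
  assumes n: "n \<ge> 1" and y0: "0 \<le> y" and yx: "y \<le> x" and K: "K > 0"
    and hK: "3 * (K * x^(2*n-1)) \<le> 2 * real n - 1"
  shows "(x-y)^(Suc (2*n)) - x^(Suc (2*n)) - y^(Suc (2*n)) - K*(x^(2*n)*y^(2*n))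
     + (\<Sum>l<n. real (Suc (2*n) choose (2*l+1)) * (y^(2*l+1)*x^(2*n-2*l))) \<ge> 0"
proof -
  define N where "N = Suc (2*n)"
  define E where "E l = real (N choose (2*l)) * y^(2*l) * x^(N-2*l)" for l
  define Od where "Od l = real (N choose (2*l+1)) * (y^(2*l+1) * x^(2*n-2*l))" for l
  have "(x-y)^N = ((-y)+x)^N" by simp
  also have "\<dots> = (\<Sum>k\<le>Suc(2*n). real (N choose k) * (-y)^k * x^(N-k))"
    unfolding binomial_ring N_def by simp
  also have "\<dots> = (\<Sum>l\<le>n. real (N choose (2*l)) * (-y)^(2*l) * x^(N-2*l)
         + real (N choose Suc (2*l)) * (-y)^(Suc (2*l)) * x^(N-Suc (2*l)))"
    by (rule sum.in_pairs_0)
  also have "\<dots> = (\<Sum>l\<le>n. E l - Od l)"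
    by (intro sum.cong refl) (simp add: E_def Od_def N_def)
  finally have bin: "(x-y)^N = (\<Sum>l\<le>n. E l) - (\<Sum>l\<le>n. Od l)"
    by (simp add: sum_subtractf)
  have Osplit: "(\<Sum>l\<le>n. Od l) = (\<Sum>l<n. Od l) + y^N"
    by (simp add: lessThan_Suc_atMost[symmetric] Od_def N_def)
  have x0: "0 \<le> x" using y0 yx by linarith
  have Enn: "E l \<ge> 0" for l using x0 y0 by (simp add: E_def)
  have "E 0 + E n = sum E {0, n}" using n by simp
  also have "\<dots> \<le> sum E {..n}" by (rule sum_mono2) (use Enn in auto)
  finally have Ege: "E 0 + E n \<le> sum E {..n}" .
  have E0: "E 0 = x^N" by (simp add: E_def)
  have En: "E n = (2*real n+1) * (x*y^(2*n))" by (simp add: E_def N_def)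
  have p1: "K*(x^(2*n)*y^(2*n)) \<le> (2*real n - 1)/3 * (x*y^(2*n))"
  proof -
    have "x^(2*n) = x^(2*n-1) * x" using n by (cases n) auto
    then have "K*(x^(2*n)*y^(2*n)) = (K*x^(2*n-1)) * (x*y^(2*n))" by simp
    also have "\<dots> \<le> (2*real n - 1)/3 * (x*y^(2*n))"
      by (rule mult_right_mono) (use hK x0 y0 in auto)
    finally show ?thesis .
  qed
  have p2: "y^N \<le> x*y^(2*n)" unfolding N_def using yx y0 by (simp add: mult_right_mono)
  have "(x-y)^N - x^N - y^N - K*(x^(2*n)*y^(2*n)) + (\<Sum>l<n. Od l) \<ge> 0"
  proof -
    have A0: "0 \<le> x*y^(2*n)" using x0 y0 by simp
    have c0: "0 \<le> (2*real n + 1) - 2 - (2*real n - 1)/3" using n by simp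
    have "0 \<le> ((2*real n + 1) - 2 - (2*real n - 1)/3) * (x*y^(2*n))"
      using A0 c0 by simp
    then have "(2*real n + 1) * (x*y^(2*n)) \<ge> 2 * (x*y^(2*n)) + (2*real n - 1)/3 * (x*y^(2*n))"
      by (simp add: algebra_simps)
    then show ?thesis using bin Osplit Ege E0 En p1 p2
      by linarith
  qed
  then show ?thesis unfolding N_def Od_def by simp
qed

lemma caseC:
  fixes u v K a :: real and n :: nat
  assumes n: "n \<ge> 1" and u0: "0 \<le> u" and v0: "0 \<le> v" and ua: "u \<le> a" and va: "v \<le> a" and K: "K > 0"
    and hK: "3 * (K * a^(2*n-1)) \<le> 2 * real n - 1"
  shows "(u+v)^(Suc (2*n)) - u^(Suc (2*n)) + v^(Suc (2*n)) - K*(u^(2*n) * v^(2*n))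
     - (\<Sum>l<n. real (Suc (2*n) choose (2*l+1)) * (v^(2*l+1)*u^(2*n-2*l)))
     - K/2 * (u^(2*n-1) * v^(Suc (2*n))) \<ge> 0"
proof -
  obtain m where m: "n = Suc m" using n by (cases n) auto
  define N where "N = Suc (2*n)"
  define E where "E l = real (N choose (2*l)) * v^(2*l) * u^(N-2*l)" for l
  define Od where "Od l = real (N choose (2*l+1)) * (v^(2*l+1) * u^(2*n-2*l))" for l
  have "(u+v)^N = (v+u)^N" by (simp add: add.commute)
  also have "\<dots> = (\<Sum>k\<le>Suc(2*n). real (N choose k) * v^k * u^(N-k))"
    unfolding binomial_ring N_def by simp
  also have "\<dots> = (\<Sum>l\<le>n. real (N choose (2*l)) * v^(2*l) * u^(N-2*l)
         + real (N choose Suc (2*l)) * v^(Suc (2*l)) * u^(N-Suc (2*l)))"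
    by (rule sum.in_pairs_0)
  also have "\<dots> = (\<Sum>l\<le>n. E l + Od l)"
    by (intro sum.cong refl) (simp add: E_def Od_def N_def)
  finally have bin: "(u+v)^N = (\<Sum>l\<le>n. E l) + (\<Sum>l\<le>n. Od l)"
    by (simp add: sum.distrib)
  have Osplit: "(\<Sum>l\<le>n. Od l) = (\<Sum>l<n. Od l) + v^N"
    by (simp add: lessThan_Suc_atMost[symmetric] Od_def N_def)
  have Enn: "E l \<ge> 0" for l using u0 v0 by (simp add: E_def)
  have "E 0 + E n = sum E {0, n}" using n by simp
  also have "\<dots> \<le> sum E {..n}" by (rule sum_mono2) (use Enn in auto)
  finally have Ege: "E 0 + E n \<le> sum E {..n}" .
  have E0: "E 0 = u^N" by (simp add: E_def)
  have En: "E n = (2*real n+1) * (u* v^(2*n))" by (simp add: E_def N_def)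
  have a0: "0 \<le> a" using u0 ua by linarith
  have "K * u^(2*n-1) \<le> K * a^(2*n-1)"
    using K u0 ua by (simp add: power_mono)
  then have b1: "K * u^(2*n-1) \<le> (2*real n - 1)/3" using hK by simp
  have "u^(2*n-2) * v \<le> a^(2*n-2) * a"
    by (rule mult_mono) (use u0 v0 ua va a0 in \<open>auto simp: power_mono\<close>)
  also have "a^(2*n-2) * a = a^(2*n-1)" using m by simp
  finally have "K * (u^(2*n-2) * v) \<le> K * a^(2*n-1)" using K by simp
  then have b2: "K * (u^(2*n-2) * v) \<le> (2*real n - 1)/3" using hK by simp
  have eq1: "u^(2*n) = u^(2*n-1) * u" using m by simp
  have eq2: "u^(2*n-1) = u^(2*n-2) * u" using m by simp
  have A0: "0 \<le> u* v^(2*n)" using u0 v0 by simp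
  have p1: "K*(u^(2*n) * v^(2*n)) \<le> (2*real n - 1)/3 * (u* v^(2*n))"
  proof -
    have "K*(u^(2*n) * v^(2*n)) = (K*u^(2*n-1)) * (u* v^(2*n))" using eq1 by simp
    also have "\<dots> \<le> (2*real n - 1)/3 * (u* v^(2*n))"
      by (rule mult_right_mono) (use b1 A0 in auto)
    finally show ?thesis .
  qed
  have p2: "K/2*(u^(2*n-1) * v^N) \<le> (2*real n - 1)/6 * (u* v^(2*n))"
  proof -
    have "K/2*(u^(2*n-1) * v^N) = (K*(u^(2*n-2)* v))/2 * (u* v^(2*n))" using eq2 by (simp add: N_def)
    also have "\<dots> \<le> ((2*real n - 1)/3)/2 * (u* v^(2*n))"
      by (rule mult_right_mono) (use b2 A0 in \<open>auto simp: ac_simps\<close>)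
    finally show ?thesis by simp
  qed
  have vN: "0 \<le> v^N" using v0 by simp
  have c0: "0 \<le> ((2*real n + 1) - (2*real n - 1)/3 - (2*real n - 1)/6) * (u* v^(2*n))"
    using A0 n by simp
  then have "(2*real n + 1) * (u* v^(2*n)) \<ge> (2*real n - 1)/3 * (u* v^(2*n)) + (2*real n - 1)/6 * (u* v^(2*n))"
    by (simp add: algebra_simps)
  then have "(u+v)^N - u^N + v^N - K*(u^(2*n) * v^(2*n)) - (\<Sum>l<n. Od l) - K/2*(u^(2*n-1) * v^N) \<ge> 0"
    using bin Osplit Ege E0 En p1 p2 vN by linarith
  then show ?thesis unfolding N_def Od_def by simp
qed


lemma caseB:
  fixes x y K :: real and n :: nat
  assumes n: "n \<ge> 1" and x0: "x < 0" and y0: "y < 0" and K: "K > 0"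
  shows "- K/2 * (x^(2*n-1) * y^(Suc (2*n)) + y^(2*n-1) * x^(Suc (2*n)))
     \<le> \<bar>x-y\<bar>^(Suc (2*n)) - x^(Suc (2*n)) - y^(Suc (2*n)) - K*(x^(2*n)*y^(2*n))"
proof -
  obtain m where m: "n = Suc m" using n by (cases n) auto
  define w where "w = (x*y)^(2*m+1)"
  have w0: "w \<ge> 0" unfolding w_def using x0 y0 by (simp add: zero_le_mult_iff)
  have e1: "x^(2*n-1) * y^(Suc (2*n)) = w * y^2" unfolding w_def m
    by (simp add: power_mult_distrib power2_eq_square)
  have e2: "y^(2*n-1) * x^(Suc (2*n)) = w * x^2" unfolding w_def m
    by (simp add: power_mult_distrib power2_eq_square)
  have e3: "x^(2*n)*y^(2*n) = w * (x*y)" unfolding w_def m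
    by (simp add: power_mult_distrib)
  have "0 \<le> x^(2*n)" "0 \<le> y^(2*n)" by (simp_all add: power_mult)
  then have xN: "x^(Suc (2*n)) \<le> 0" and yN: "y^(Suc (2*n)) \<le> 0" using x0 y0
    by (simp_all add: mult_nonpos_nonneg)
  have ab: "0 \<le> \<bar>x-y\<bar>^(Suc (2*n))" by simp
  have "0 \<le> K/2 * (w * (x-y)^2)" using K w0 by simp
  then have "K * (w*(x*y)) \<le> K/2 * (w * y^2) + K/2 * (w*x^2)"
    by (simp add: power2_eq_square algebra_simps)
  then have "K * (w*(x*y)) \<le> K/2 * (w*y^2 + w*x^2)" by (simp add: algebra_simps)
  moreover have "- K/2 * (w*y^2 + w*x^2) = -(K/2 * (w*y^2 + w*x^2))" by simp
  ultimately show ?thesis unfolding e1 e2 e3 using xN yN ab by linarith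
qed

definition Zf :: "nat \<Rightarrow> real \<Rightarrow> real \<Rightarrow> real \<Rightarrow> real" where
  "Zf n K x y = - (\<Sum>l<n. real (Suc (2*n) choose (2*l+1)) *
      (x^(2*l+1) * (max y 0)^(2*n-2*l) + y^(2*l+1) * (max x 0)^(2*n-2*l)))
    - K/2 * (x^(2*n-1) * (min y 0)^(Suc (2*n)) + y^(2*n-1) * (min x 0)^(Suc (2*n)))"

definition Ff :: "nat \<Rightarrow> real \<Rightarrow> real \<Rightarrow> real \<Rightarrow> real" where
  "Ff n K x y = \<bar>x-y\<bar>^(Suc (2*n)) - x^(Suc (2*n)) - y^(Suc (2*n)) - K*(x^(2*n)*y^(2*n))"

lemma Zf_sym: "Zf n K x y = Zf n K y x"
  unfolding Zf_def by (simp add: add.commute)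

lemma Ff_sym: "Ff n K x y = Ff n K y x"
  unfolding Ff_def by (simp add: abs_minus_commute mult.commute)

lemma pw_ord:
  fixes x y K a :: real and n :: nat
  assumes n: "n \<ge> 1" and K: "K > 0" and yx: "y \<le> x" and xa: "\<bar>x\<bar> \<le> a" and ya: "\<bar>y\<bar> \<le> a"
    and hK: "3 * (K * a^(2*n-1)) \<le> 2 * real n - 1"
  shows "Zf n K x y \<le> Ff n K x y"
proof (cases "0 \<le> y")
  case True
  have x0: "0 \<le> x" using True yx by linarith
  have "K * x^(2*n-1) \<le> K * a^(2*n-1)"
    using K x0 xa by (simp add: power_mono)
  then have hK': "3 * (K * x^(2*n-1)) \<le> 2 * real n - 1" using hK by simp
  have A: "(x-y)^(Suc (2*n)) - x^(Suc (2*n)) - y^(Suc (2*n)) - K*(x^(2*n)*y^(2*n))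
     + (\<Sum>l<n. real (Suc (2*n) choose (2*l+1)) * (y^(2*l+1)*x^(2*n-2*l))) \<ge> 0"
    by (rule caseA[OF n True yx K hK'])
  have S1: "(\<Sum>l<n. real (Suc (2*n) choose (2*l+1)) * (x^(2*l+1)*y^(2*n-2*l))) \<ge> 0"
    using x0 True by (intro sum_nonneg) simp
  have Z: "Zf n K x y = - ((\<Sum>l<n. real (Suc (2*n) choose (2*l+1)) * (x^(2*l+1)*y^(2*n-2*l)))
     + (\<Sum>l<n. real (Suc (2*n) choose (2*l+1)) * (y^(2*l+1)*x^(2*n-2*l))))"
    unfolding Zf_def using x0 True by (simp add: sum.distrib[symmetric] distrib_left)
  have F: "Ff n K x y = (x-y)^(Suc (2*n)) - x^(Suc (2*n)) - y^(Suc (2*n)) - K*(x^(2*n)*y^(2*n))"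
    unfolding Ff_def using yx by simp
  show ?thesis using A S1 Z F by linarith
next
  case False
  show ?thesis
  proof (cases "0 \<le> x")
    case True
    define v where "v = -y"
    have v0: "0 \<le> v" using False v_def by simp
    have va: "v \<le> a" using ya v_def by simp
    have ua: "x \<le> a" using xa by simp
    have C: "(x+v)^(Suc (2*n)) - x^(Suc (2*n)) + v^(Suc (2*n)) - K*(x^(2*n)* v^(2*n))
     - (\<Sum>l<n. real (Suc (2*n) choose (2*l+1)) * (v^(2*l+1)*x^(2*n-2*l)))
     - K/2 * (x^(2*n-1) * v^(Suc (2*n))) \<ge> 0"
      by (rule caseC[OF n True v0 ua va K hK])
    have ysub: "y = - v" using v_def by simp
    have sumeq: "(\<Sum>l<n. real (Suc (2*n) choose (2*l+1)) *
      (x^(2*l+1) * (max y 0)^(2*n-2*l) + y^(2*l+1) * (max x 0)^(2*n-2*l)))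
      = - (\<Sum>l<n. real (Suc (2*n) choose (2*l+1)) * (v^(2*l+1)*x^(2*n-2*l)))"
      unfolding sum_negf[symmetric]
    proof (intro sum.cong refl)
      fix l assume "l \<in> {..<n}"
      then have "2*n-2*l \<noteq> 0" by auto
      then show "real (Suc (2*n) choose (2*l+1)) *
        (x^(2*l+1) * (max y 0)^(2*n-2*l) + y^(2*l+1) * (max x 0)^(2*n-2*l))
        = - (real (Suc (2*n) choose (2*l+1)) * (v^(2*l+1)*x^(2*n-2*l)))"
        using False True ysub by (simp add: power_0_left)
    qed
    have Z: "Zf n K x y = (\<Sum>l<n. real (Suc (2*n) choose (2*l+1)) * (v^(2*l+1)*x^(2*n-2*l)))
       + K/2 * (x^(2*n-1) * v^(Suc (2*n)))"
      unfolding Zf_def sumeq using False True ysub by simp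
    have F: "Ff n K x y = (x+v)^(Suc (2*n)) - x^(Suc (2*n)) + v^(Suc (2*n)) - K*(x^(2*n)* v^(2*n))"
      unfolding Ff_def using False True ysub by simp
    show ?thesis using C Z F by linarith
  next
    case False2: False
    have Z: "Zf n K x y = - K/2 * (x^(2*n-1) * y^(Suc (2*n)) + y^(2*n-1) * x^(Suc (2*n)))"
    proof -
      have "(\<Sum>l<n. real (Suc (2*n) choose (2*l+1)) *
      (x^(2*l+1) * (max y 0)^(2*n-2*l) + y^(2*l+1) * (max x 0)^(2*n-2*l))) = 0"
        by (intro sum.neutral ballI) (use False False2 in \<open>auto simp: power_0_left\<close>)
      then show ?thesis unfolding Zf_def using False False2 by simp
    qed
    show ?thesis unfolding Z Ff_def
      by (rule caseB[OF n _ _ K]) (use False False2 in auto)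
  qed
qed

lemma pw:
  fixes x y K a :: real and n :: nat
  assumes n: "n \<ge> 1" and K: "K > 0" and xa: "\<bar>x\<bar> \<le> a" and ya: "\<bar>y\<bar> \<le> a"
    and hK: "3 * (K * a^(2*n-1)) \<le> 2 * real n - 1"
  shows "Zf n K x y \<le> Ff n K x y"
proof (cases "y \<le> x")
  case True show ?thesis by (rule pw_ord[OF n K True xa ya hK])
next
  case False
  then have "x \<le> y" by simp
  from pw_ord[OF n K this ya xa hK] show ?thesis by (simp add: Zf_sym Ff_sym)
qed


lemma int_cont:
  fixes X Y :: "'a \<Rightarrow> real" and h :: "real \<Rightarrow> real \<Rightarrow> real"
  assumes P: "prob_space P" and Xm: "X \<in> borel_measurable P" and Ym: "Y \<in> borel_measurable P"
    and AX: "AE \<omega> in P. \<bar>X \<omega>\<bar> \<le> a" and AY: "AE \<omega> in P. \<bar>Y \<omega>\<bar> \<le> a"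
    and hc: "continuous_on UNIV (\<lambda>z. h (fst z) (snd z))"
  shows "integrable P (\<lambda>\<omega>. h (X \<omega>) (Y \<omega>))"
proof -
  interpret prob_space P by (rule P)
  define S where "S = {-a..a} \<times> {-a..a}"
  have "compact S" unfolding S_def by (intro compact_Times compact_Icc)
  then have "compact ((\<lambda>z. h (fst z) (snd z)) ` S)"
    by (intro compact_continuous_image continuous_on_subset[OF hc]) auto
  then have "bounded ((\<lambda>z. h (fst z) (snd z)) ` S)" by (rule compact_imp_bounded)
  then obtain B where B: "\<And>z. z \<in> S \<Longrightarrow> norm (h (fst z) (snd z)) \<le> B"
    unfolding bounded_iff by auto
  have hm: "(\<lambda>z. h (fst z) (snd z)) \<in> borel_measurable borel"
    by (rule borel_measurable_continuous_onI[OF hc])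
  have pm: "(\<lambda>\<omega>. (X \<omega>, Y \<omega>)) \<in> borel_measurable P"
    using Xm Ym by (simp add: borel_measurable_Pair)
  have m: "(\<lambda>\<omega>. h (X \<omega>) (Y \<omega>)) \<in> borel_measurable P"
    using measurable_compose[OF pm hm] by simp
  show ?thesis
  proof (rule integrable_const_bound[where B=B])
    show "AE \<omega> in P. norm (h (X \<omega>) (Y \<omega>)) \<le> B"
    proof (rule AE_mp[OF AE_conjI[OF AX AY]], rule AE_I2, safe)
      fix \<omega> assume "\<bar>X \<omega>\<bar> \<le> a" "\<bar>Y \<omega>\<bar> \<le> a"
      then have "(X \<omega>, Y \<omega>) \<in> S" unfolding S_def by auto
      from B[OF this] show "norm (h (X \<omega>) (Y \<omega>)) \<le> B" by simp
    qed
  qed (rule m)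
qed


theorem proposition1:
  fixes P :: "'a measure" and X Y :: "'a \<Rightarrow> real" and n :: nat and K :: real
  assumes "prob_space P"
    and "n \<ge> 1"
    and "K > 0"
    and "X \<in> borel_measurable P" and "Y \<in> borel_measurable P"
    and "prob_space.indep_var P borel X borel Y"
    and "distr P borel X = distr P borel Y"
    and "AE \<omega> in P. \<bar>X \<omega>\<bar> \<le> ((2 * real n - 1) / (3 * K)) powr (1 / (2 * real n - 1))"
    and "\<And>j. j \<in> {1..n} \<Longrightarrow> prob_space.expectation P (\<lambda>\<omega>. X \<omega> ^ (2 * j - 1)) = 0"
  shows "prob_space.expectation P (\<lambda>\<omega>. \<bar>X \<omega> - Y \<omega>\<bar> ^ (2 * n + 1))
           - 2 * prob_space.expectation P (\<lambda>\<omega>. X \<omega> ^ (2 * n + 1))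
           - K * (prob_space.expectation P (\<lambda>\<omega>. X \<omega> ^ (2 * n))) ^ 2 \<ge> 0"
proof -
  interpret prob_space P by (rule assms(1))
  note Xm = assms(4) and Ym = assms(5) and ind = assms(6) and dst = assms(7)
    and n = assms(2) and K = assms(3)
  define a where "a = ((2 * real n - 1) / (3 * K)) powr (1 / (2 * real n - 1))"
  have AX: "AE \<omega> in P. \<bar>X \<omega>\<bar> \<le> a" using assms(8) unfolding a_def .
  have sA: "{x \<in> space borel. \<bar>x\<bar> \<le> (a::real)} \<in> sets borel" by measurable
  have AY: "AE \<omega> in P. \<bar>Y \<omega>\<bar> \<le> a"
  proof -
    have "AE x in distr P borel X. \<bar>x\<bar> \<le> a" using AX by (subst AE_distr_iff[OF Xm sA])
    then have "AE x in distr P borel Y. \<bar>x\<bar> \<le> a" unfolding dst .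
    then show ?thesis by (subst (asm) AE_distr_iff[OF Ym sA])
  qed
  have b0: "(2*real n - 1)/(3*K) > 0" using n K by simp
  have hK: "3 * (K * a^(2*n-1)) \<le> 2*real n - 1"
  proof -
    have r: "real (2*n-1) = 2*real n - 1" using n by (simp add: of_nat_diff)
    have bne: "(2*real n - 1)/(3*K) \<noteq> 0" using b0 by linarith
    have apos: "a > 0" unfolding a_def using bne powr_gt_zero by blast
    have "a^(2*n-1) = a powr real (2*n-1)" using apos by (simp add: powr_realpow)
    also have "\<dots> = (2*real n - 1)/(3*K)" unfolding a_def r
    proof -
      have "real n \<ge> 1" using n by simp
      then have pos: "2 * real n - 1 > 0" by linarith
      then show "(((2 * real n - 1) / (3 * K)) powr (1 / (2 * real n - 1))) powr (2 * real n - 1) = (2 * real n - 1) / (3 * K)"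
        using b0 pos K by (simp add: powr_powr)
    qed
    finally show ?thesis using K by (simp add: field_simps)
  qed
  have I: "integrable P (\<lambda>\<omega>. h (X \<omega>) (Y \<omega>))"
    if "continuous_on UNIV (\<lambda>z. h (fst z) (snd z))" for h :: "real \<Rightarrow> real \<Rightarrow> real"
    by (rule int_cont[OF assms(1) Xm Ym AX AY that])
  have IX: "integrable P (\<lambda>\<omega>. f (X \<omega>))" if "continuous_on UNIV f" for f :: "real \<Rightarrow> real"
    using I[of "\<lambda>x y. f x"] by (simp add: continuous_on_compose2[OF that continuous_on_fst])
  have IY: "integrable P (\<lambda>\<omega>. f (Y \<omega>))" if "continuous_on UNIV f" for f :: "real \<Rightarrow> real"
    using I[of "\<lambda>x y. f y"] by (simp add: continuous_on_compose2[OF that continuous_on_snd])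
  have indep: "integral\<^sup>L P (\<lambda>\<omega>. f (X \<omega>) * g (Y \<omega>)) = integral\<^sup>L P (\<lambda>\<omega>. f (X \<omega>)) * integral\<^sup>L P (\<lambda>\<omega>. g (Y \<omega>))"
    if "continuous_on UNIV f" "continuous_on UNIV g" for f g :: "real \<Rightarrow> real"
    by (rule indep_var_lebesgue_integral[OF indep_var_compose[unfolded comp_def, OF ind]])
       (use that in \<open>auto intro: borel_measurable_continuous_onI IX IY\<close>)
  have same: "integral\<^sup>L P (\<lambda>\<omega>. g (Y \<omega>)) = integral\<^sup>L P (\<lambda>\<omega>. g (X \<omega>))"
    if "continuous_on UNIV g" for g :: "real \<Rightarrow> real"
  proof -
    have gm: "g \<in> borel_measurable borel" by (rule borel_measurable_continuous_onI[OF that])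
    have "integral\<^sup>L P (\<lambda>\<omega>. g (Y \<omega>)) = integral\<^sup>L (distr P borel Y) g"
      by (rule integral_distr[OF Ym gm, symmetric])
    also have "\<dots> = integral\<^sup>L (distr P borel X) g" using dst by simp
    also have "\<dots> = integral\<^sup>L P (\<lambda>\<omega>. g (X \<omega>))" by (rule integral_distr[OF Xm gm])
    finally show ?thesis .
  qed
  have oddX: "integral\<^sup>L P (\<lambda>\<omega>. X \<omega> ^ (2*l+1)) = 0" if "l < n" for l
    using assms(9)[of "l+1"] that by simp
  have oddY: "integral\<^sup>L P (\<lambda>\<omega>. Y \<omega> ^ (2*l+1)) = 0" if "l < n" for l
    using same[of "\<lambda>x. x ^ (2*l+1)"] oddX[OF that] by (simp add: continuous_intros)
  have odd2X: "integral\<^sup>L P (\<lambda>\<omega>. X \<omega> ^ (2*n-1)) = 0"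
    using assms(9)[of n] n by simp
  have odd2Y: "integral\<^sup>L P (\<lambda>\<omega>. Y \<omega> ^ (2*n-1)) = 0"
    using same[of "\<lambda>x. x ^ (2*n-1)"] odd2X by (simp add: continuous_intros)
  define N where "N = Suc (2*n)"
  have T1: "integral\<^sup>L P (\<lambda>\<omega>. X \<omega> ^ (2*l+1) * max (Y \<omega>) 0 ^ k) = 0" if "l < n" for l k
    using indep[of "\<lambda>x. x ^ (2*l+1)" "\<lambda>x. max x 0 ^ k"] oddX[OF that]
    by (simp add: continuous_intros)
  have T2: "integral\<^sup>L P (\<lambda>\<omega>. Y \<omega> ^ (2*l+1) * max (X \<omega>) 0 ^ k) = 0" if "l < n" for l k
    using indep[of "\<lambda>x. max x 0 ^ k" "\<lambda>x. x ^ (2*l+1)"] oddY[OF that]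
    by (simp add: continuous_intros mult.commute)
  have T3: "integral\<^sup>L P (\<lambda>\<omega>. X \<omega> ^ (2*n-1) * min (Y \<omega>) 0 ^ k) = 0" for k
    using indep[of "\<lambda>x. x ^ (2*n-1)" "\<lambda>x. min x 0 ^ k"] odd2X
    by (simp add: continuous_intros)
  have T4: "integral\<^sup>L P (\<lambda>\<omega>. Y \<omega> ^ (2*n-1) * min (X \<omega>) 0 ^ k) = 0" for k
    using indep[of "\<lambda>x. min x 0 ^ k" "\<lambda>x. x ^ (2*n-1)"] odd2Y
    by (simp add: continuous_intros mult.commute)
  have J1: "integrable P (\<lambda>\<omega>. X \<omega> ^ i * max (Y \<omega>) 0 ^ k)" for i k
    using I[of "\<lambda>x y. x ^ i * max y 0 ^ k"] by (simp add: continuous_intros)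
  have J2: "integrable P (\<lambda>\<omega>. Y \<omega> ^ i * max (X \<omega>) 0 ^ k)" for i k
    using I[of "\<lambda>x y. y ^ i * max x 0 ^ k"] by (simp add: continuous_intros)
  have J3: "integrable P (\<lambda>\<omega>. X \<omega> ^ i * min (Y \<omega>) 0 ^ k)" for i k
    using I[of "\<lambda>x y. x ^ i * min y 0 ^ k"] by (simp add: continuous_intros)
  have J4: "integrable P (\<lambda>\<omega>. Y \<omega> ^ i * min (X \<omega>) 0 ^ k)" for i k
    using I[of "\<lambda>x y. y ^ i * min x 0 ^ k"] by (simp add: continuous_intros)
  have EZ: "integral\<^sup>L P (\<lambda>\<omega>. Zf n K (X \<omega>) (Y \<omega>)) = 0"
  proof -
    define c where "c l = real (Suc (2*n) choose (2*l+1))" for l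
    define A where "A l \<omega> = X \<omega>^(2*l+1) * (max (Y \<omega>) 0)^(2*n-2*l) + Y \<omega>^(2*l+1) * (max (X \<omega>) 0)^(2*n-2*l)" for l \<omega>
    define B where "B \<omega> = X \<omega>^(2*n-1) * (min (Y \<omega>) 0)^(Suc (2*n)) + Y \<omega>^(2*n-1) * (min (X \<omega>) 0)^(Suc (2*n))" for \<omega>
    have iA: "integrable P (A l)" for l unfolding A_def by (rule Bochner_Integration.integrable_add[OF J1 J2])
    have iB: "integrable P B" unfolding B_def by (rule Bochner_Integration.integrable_add[OF J3 J4])
    have iS: "integrable P (\<lambda>\<omega>. \<Sum>l<n. c l * A l \<omega>)"
      by (intro Bochner_Integration.integrable_sum Bochner_Integration.integrable_mult_right iA)
    have s1: "integral\<^sup>L P (\<lambda>\<omega>. c l * A l \<omega>) = 0" if "l < n" for l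
    proof -
      have "integral\<^sup>L P (A l) = 0"
        unfolding A_def by (simp only: Bochner_Integration.integral_add[OF J1 J2] T1[OF that] T2[OF that] add_0)
      then show ?thesis by simp
    qed
    have s2: "integral\<^sup>L P (\<lambda>\<omega>. \<Sum>l<n. c l * A l \<omega>) = 0"
    proof (subst Bochner_Integration.integral_sum)
      show "(\<Sum>l<n. integral\<^sup>L P (\<lambda>\<omega>. c l * A l \<omega>)) = 0"
        by (rule sum.neutral) (use s1 in auto)
    qed (auto intro: Bochner_Integration.integrable_mult_right iA)
    have s3: "integral\<^sup>L P B = 0"
      unfolding B_def by (simp only: Bochner_Integration.integral_add[OF J3 J4] T3 T4 add_0)
    have ZE: "(\<lambda>\<omega>. Zf n K (X \<omega>) (Y \<omega>)) = (\<lambda>\<omega>. - (\<Sum>l<n. c l * A l \<omega>) - K/2 * B \<omega>)"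
      unfolding Zf_def c_def A_def B_def by simp
    have "integral\<^sup>L P (\<lambda>\<omega>. Zf n K (X \<omega>) (Y \<omega>)) = - integral\<^sup>L P (\<lambda>\<omega>. \<Sum>l<n. c l * A l \<omega>) - K/2 * integral\<^sup>L P B"
      unfolding ZE using iS iB by simp
    then show ?thesis using s2 s3 by simp
  qed
  have "continuous_on UNIV (\<lambda>z. Ff n K (fst z) (snd z))"
    unfolding Ff_def by (intro continuous_intros)
  from I[OF this] have IF: "integrable P (\<lambda>\<omega>. Ff n K (X \<omega>) (Y \<omega>))" .
  have "continuous_on UNIV (\<lambda>z. Zf n K (fst z) (snd z))"
    unfolding Zf_def by (intro continuous_intros)
  from I[OF this] have IZ: "integrable P (\<lambda>\<omega>. Zf n K (X \<omega>) (Y \<omega>))" .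
  have "integral\<^sup>L P (\<lambda>\<omega>. Zf n K (X \<omega>) (Y \<omega>)) \<le> integral\<^sup>L P (\<lambda>\<omega>. Ff n K (X \<omega>) (Y \<omega>))"
    by (rule integral_mono_AE[OF IZ IF])
       (rule AE_mp[OF AE_conjI[OF AX AY]], rule AE_I2, use pw[OF n K _ _ hK] in blast)
  then have EF: "0 \<le> integral\<^sup>L P (\<lambda>\<omega>. Ff n K (X \<omega>) (Y \<omega>))" using EZ by simp
  have i1: "integrable P (\<lambda>\<omega>. \<bar>X \<omega> - Y \<omega>\<bar> ^ Suc (2*n))"
    using I[of "\<lambda>x y. \<bar>x-y\<bar>^(Suc (2*n))"] by (simp add: continuous_intros)
  have i2: "integrable P (\<lambda>\<omega>. X \<omega> ^ i)" for i
    using IX[of "\<lambda>x. x^i"] by (simp add: continuous_intros)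
  have i3: "integrable P (\<lambda>\<omega>. Y \<omega> ^ i)" for i
    using IY[of "\<lambda>x. x^i"] by (simp add: continuous_intros)
  have i4: "integrable P (\<lambda>\<omega>. X \<omega> ^ (2*n) * Y \<omega> ^ (2*n))"
    using I[of "\<lambda>x y. x^(2*n)*y^(2*n)"] by (simp add: continuous_intros)
  have e1: "integral\<^sup>L P (\<lambda>\<omega>. X \<omega> ^ (2*n) * Y \<omega> ^ (2*n)) = (integral\<^sup>L P (\<lambda>\<omega>. X \<omega> ^ (2*n)))^2"
    using indep[of "\<lambda>x. x^(2*n)" "\<lambda>x. x^(2*n)"] same[of "\<lambda>x. x^(2*n)"]
    by (simp add: continuous_intros power2_eq_square)
  have e2: "integral\<^sup>L P (\<lambda>\<omega>. Y \<omega> ^ Suc (2*n)) = integral\<^sup>L P (\<lambda>\<omega>. X \<omega> ^ Suc (2*n))"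
    using same[of "\<lambda>x. x^Suc (2*n)"] by (simp add: continuous_intros)
  have "integral\<^sup>L P (\<lambda>\<omega>. Ff n K (X \<omega>) (Y \<omega>)) =
     integral\<^sup>L P (\<lambda>\<omega>. \<bar>X \<omega> - Y \<omega>\<bar> ^ Suc (2*n)) - integral\<^sup>L P (\<lambda>\<omega>. X \<omega> ^ Suc (2*n))
     - integral\<^sup>L P (\<lambda>\<omega>. Y \<omega> ^ Suc (2*n)) - K * integral\<^sup>L P (\<lambda>\<omega>. X \<omega> ^ (2*n) * Y \<omega> ^ (2*n))"
    unfolding Ff_def
    by (simp only: Bochner_Integration.integral_diff Bochner_Integration.integrable_diff
        integral_mult_right_zero Bochner_Integration.integrable_mult_right i1 i2 i3 i4)
  then show ?thesis using EF e1 e2 by simp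
qed

end
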